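(* Let $C>0$ and $\delta>0$, let $f \in C((0,\infty);(0,\infty))$ be asymptotically increasing with $\lim_{x\to\infty} f(x)/x = \infty$, and let $\psi \in C([-\delta,0];(0,\infty))$. Consider \[ z'(t) = C\int_{t-\delta}^t f(z(s))\,ds, \quad t\ge 0; \qquad z(t)=\psi(t), \quad t\in[-\delta,0]. \] If a solution satisfies $z \in C([-\delta,\infty);(0,\infty))$, then $z$ exhibits superexponential growth, i.e. $z(t)\to\infty$ as $t\to\infty$ and $\lim_{t\to\infty} z(t-\epsilon)/z(t) = 0$ for every $\epsilon>0$.
   Context: "$f$ is asymptotically increasing" means that there is a continuous increasing function $\phi:(0,\infty)\to(0,\infty)$ with $f(x)/\phi(x)\to 1$ as $x\to\infty$. *)

theory Defs
  imports "HOL-Analysis.Analysis"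
begin

definition asymptotically_increasing :: "(real \<Rightarrow> real) \<Rightarrow> bool" where
  "asymptotically_increasing f \<longleftrightarrow>
     (\<exists>\<phi>. continuous_on {0<..} \<phi> \<and> strict_mono_on {0<..} \<phi> \<and>
          (\<forall>x>0. \<phi> x > 0) \<and> ((\<lambda>x. f x / \<phi> x) \<longlongrightarrow> 1) at_top)"

end

theory Submission
  imports Defs
begin

theorem lemma6p1:
  fixes C \<delta> :: real and f \<psi> z :: "real \<Rightarrow> real"
  assumes C_pos: "C > 0" and delta_pos: "\<delta> > 0"
    and f_cont: "continuous_on {0<..} f" and f_pos: "\<forall>x>0. f x > 0"
    and f_asym: "asymptotically_increasing f"
    and f_superlin: "filterlim (\<lambda>x. f x / x) at_top at_top"
    and psi_cont: "continuous_on {-\<delta>..0} \<psi>" and psi_pos: "\<forall>t\<in>{-\<delta>..0}. \<psi> t > 0"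
    and z_cont: "continuous_on {-\<delta>..} z" and z_pos: "\<forall>t\<ge>-\<delta>. z t > 0"
    and z_init: "\<forall>t\<in>{-\<delta>..0}. z t = \<psi> t"
    and z_ode: "\<forall>t\<ge>0. (z has_real_derivative
                   C * integral {t-\<delta>..t} (\<lambda>s. f (z s))) (at t within {0..})"
  shows "filterlim z at_top at_top \<and>
         (\<forall>\<epsilon>>0. ((\<lambda>t. z (t - \<epsilon>) / z t) \<longlongrightarrow> 0) at_top)"
proof -
  define F where "F t = integral {t-\<delta>..t} (\<lambda>s. f (z s))" for t
  have fz_cont: "continuous_on {-\<delta>..} (\<lambda>s. f (z s))"
    by (rule continuous_on_compose2[OF f_cont z_cont]) (use z_pos in auto)
  have fz_pos: "f (z s) > 0" if "s \<ge> -\<delta>" for s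
    using f_pos z_pos that by auto
  have integ: "(\<lambda>s. f (z s)) integrable_on {a..b}" if "a \<ge> -\<delta>" for a b
    by (rule integrable_continuous_interval, rule continuous_on_subset[OF fz_cont]) (use that in auto)
  have IB: "c * (b - a) \<le> F t"
    if "t \<ge> 0" "t - \<delta> \<le> a" "a \<le> b" "b \<le> t" "\<forall>s\<in>{a..b}. c \<le> f (z s)" for t a b c
  proof -
    have "c * (b - a) = integral {a..b} (\<lambda>s. c)" using that by simp
    also have "\<dots> \<le> integral {a..b} (\<lambda>s. f (z s))"
      by (rule integral_le) (use that integ delta_pos in auto)
    also have "\<dots> \<le> F t" unfolding F_def
      by (rule integral_subset_le) (use that integ delta_pos in \<open>auto intro: less_imp_le[OF fz_pos]\<close>)
    finally show ?thesis .
  qed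
  have deriv: "DERIV z u :> C * F u" if "u > 0" for u
  proof -
    have "at u within {0..} = at u"
      by (rule at_within_interior) (use that in simp)
    thus ?thesis using z_ode that unfolding F_def by (metis less_imp_le)
  qed
  have MVT: "c * (b - a) \<le> z b - z a"
    if "0 \<le> a" "a \<le> b" "\<forall>u. a < u \<and> u < b \<longrightarrow> c \<le> C * F u" for a b c
  proof -
    have "(\<lambda>x. z x - c * x) a \<le> (\<lambda>x. z x - c * x) b"
    proof (rule DERIV_nonneg_imp_increasing_open[OF that(2)])
      fix x assume x: "a < x" "x < b"
      show "\<exists>y. DERIV (\<lambda>x. z x - c * x) x :> y \<and> y \<ge> 0"
        using x that by (intro exI[of _ "C * F x - c"])
          (auto intro!: derivative_eq_intros deriv)
    next
      show "continuous_on {a..b} (\<lambda>x. z x - c * x)"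
        by (intro continuous_intros continuous_on_subset[OF z_cont]) (use that delta_pos in auto)
    qed
    thus ?thesis by (simp add: algebra_simps)
  qed
  have Fnn: "0 \<le> F t" if "t \<ge> 0" for t
    using IB[of t t t 0] that delta_pos fz_pos[of t] by auto
  have mono: "z a \<le> z b" if "0 \<le> a" "a \<le> b" for a b
  proof -
    have "0 * (b - a) \<le> z b - z a"
      by (rule MVT) (use that C_pos Fnn in auto)
    thus ?thesis by simp
  qed
  have big: "\<exists>M>0. \<forall>x\<ge>M. K * x \<le> f x" for K
  proof -
    have "eventually (\<lambda>x. f x / x \<ge> max K 0) at_top"
      using f_superlin unfolding filterlim_at_top by blast
    then obtain M where M: "\<And>x. x \<ge> M \<Longrightarrow> f x / x \<ge> max K 0"
      by (auto simp: eventually_at_top_linorder)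
    show ?thesis
    proof (intro exI[of _ "max M 1"] conjI allI impI)
      fix x assume x: "x \<ge> max M 1"
      hence "f x / x \<ge> K" using M[of x] by auto
      thus "K * x \<le> f x" using x by (simp add: field_simps)
    qed simp
  qed
  obtain m where m: "m > 0" "\<And>x. x \<ge> z 0 \<Longrightarrow> m \<le> f x"
  proof -
    obtain M where M: "M > 0" "\<And>x. x \<ge> M \<Longrightarrow> 1 * x \<le> f x" using big[of 1] by auto
    have z0: "z 0 > 0" using z_pos delta_pos by auto
    have "\<exists>x\<in>{z 0..max M (z 0)}. \<forall>y\<in>{z 0..max M (z 0)}. f x \<le> f y"
      by (rule continuous_attains_inf) (use z0 in \<open>auto intro!: continuous_on_subset[OF f_cont]\<close>)
    then obtain x0 where x0: "x0 \<in> {z 0..max M (z 0)}" "\<And>y. y\<in>{z 0..max M (z 0)} \<Longrightarrow> f x0 \<le> f y"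
      by blast
    have "f x0 > 0" using x0(1) z0 f_pos by auto
    show ?thesis
    proof (rule that[of "min (f x0) (z 0)"])
      show "min (f x0) (z 0) > 0" using \<open>f x0 > 0\<close> z0 by simp
      fix x assume x: "x \<ge> z 0"
      show "min (f x0) (z 0) \<le> f x"
      proof (cases "x \<le> max M (z 0)")
        case True thus ?thesis using x0(2)[of x] x by auto
      next
        case False hence "x \<ge> M" by simp
        thus ?thesis using M(2)[of x] x by auto
      qed
    qed
  qed
  have lin: "C * m * \<delta> * (t - \<delta>) \<le> z t" if "t \<ge> \<delta>" for t
  proof -
    have "C * m * \<delta> * (t - \<delta>) \<le> z t - z \<delta>"
    proof (rule MVT)
      show "\<forall>u. \<delta> < u \<and> u < t \<longrightarrow> C * m * \<delta> \<le> C * F u"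
      proof (intro allI impI)
        fix u assume u: "\<delta> < u \<and> u < t"
        have "m * (u - (u - \<delta>)) \<le> F u"
          by (rule IB) (use u delta_pos in \<open>auto intro!: m(2) mono\<close>)
        thus "C * m * \<delta> \<le> C * F u" using C_pos by (simp add: mult.assoc)
      qed
    qed (use that delta_pos in auto)
    moreover have "z \<delta> > 0" using z_pos delta_pos by auto
    ultimately show ?thesis by linarith
  qed
  have ztop: "filterlim z at_top at_top"
  proof (subst filterlim_at_top, intro allI)
    fix Z :: real
    have pos: "C * m * \<delta> > 0" using C_pos m(1) delta_pos by simp
    show "eventually (\<lambda>t. Z \<le> z t) at_top"
      unfolding eventually_at_top_linorder
    proof (intro exI[of _ "\<delta> + \<bar>Z\<bar> / (C * m * \<delta>)"] allI impI)
      fix t assume t: "t \<ge> \<delta> + \<bar>Z\<bar> / (C * m * \<delta>)"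
      have "\<bar>Z\<bar> / (C * m * \<delta>) \<ge> 0" using pos by simp
      hence "\<bar>Z\<bar> \<le> C * m * \<delta> * (t - \<delta>)"
      proof -
        have "\<bar>Z\<bar> = C * m * \<delta> * (\<bar>Z\<bar> / (C * m * \<delta>))" using C_pos m(1) delta_pos by simp
        also have "\<dots> \<le> C * m * \<delta> * (t - \<delta>)"
          by (rule mult_left_mono) (use t pos in auto)
        finally show ?thesis .
      qed
      thus "Z \<le> z t" using lin[of t] t \<open>\<bar>Z\<bar> / (C * m * \<delta>) \<ge> 0\<close> by linarith
    qed
  qed
  have ratio: "((\<lambda>t. z (t - \<epsilon>) / z t) \<longlongrightarrow> 0) at_top" if eps: "\<epsilon> > 0" for \<epsilon>
  proof (rule tendstoI)
    fix e :: real assume e: "e > 0"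
    define \<eta> where "\<eta> = min \<epsilon> \<delta>"
    have \<eta>: "\<eta> > 0" "\<eta> \<le> \<epsilon>" "\<eta> \<le> \<delta>" using eps delta_pos by (auto simp: \<eta>_def)
    define K where "K = 4 / (C * \<eta>^2 * e) + 1"
    have Kq: "4 / (C * \<eta>^2 * e) > 0" using C_pos \<eta> e by simp
    hence K: "K > 0" unfolding K_def by linarith
    define A where "A = C * K * \<eta>^2 / 4"
    have A: "A > 0" using C_pos K \<eta> by (simp add: A_def)
    have eA: "e * A > 1"
    proof -
      have "e * A = e * (C * \<eta>^2) / 4 * K" by (simp add: A_def)
      also have "\<dots> > e * (C * \<eta>^2) / 4 * (4 / (C * \<eta>^2 * e))"
        by (rule mult_strict_left_mono) (use C_pos \<eta> e in \<open>auto simp: K_def\<close>)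
      also have "e * (C * \<eta>^2) / 4 * (4 / (C * \<eta>^2 * e)) = 1"
        using C_pos \<eta> e by (simp add: field_simps)
      finally show ?thesis .
    qed
    obtain M where M: "M > 0" "\<And>x. x \<ge> M \<Longrightarrow> K * x \<le> f x" using big[of K] by auto
    obtain T where T: "\<And>t. t \<ge> T \<Longrightarrow> M \<le> z t"
      using ztop unfolding filterlim_at_top eventually_at_top_linorder by blast
    show "eventually (\<lambda>t. dist (z (t - \<epsilon>) / z t) 0 < e) at_top"
      unfolding eventually_at_top_linorder
    proof (intro exI[of _ "max T 0 + \<epsilon> + \<eta>"] allI impI)
      fix t assume t: "t \<ge> max T 0 + \<epsilon> + \<eta>"
      have tpos: "t - \<eta> \<ge> 0" "t - \<epsilon> \<ge> 0" "t - \<eta> \<ge> T" using t \<eta> eps by auto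
      have key: "(C * K * z (t - \<eta>) * (\<eta> / 2)) * (t - (t - \<eta> / 2)) \<le> z t - z (t - \<eta> / 2)"
      proof (rule MVT)
        show "\<forall>u. t - \<eta> / 2 < u \<and> u < t \<longrightarrow> C * K * z (t - \<eta>) * (\<eta> / 2) \<le> C * F u"
        proof (intro allI impI)
          fix u assume u: "t - \<eta> / 2 < u \<and> u < t"
          have "(K * z (t - \<eta>)) * ((t - \<eta> / 2) - (t - \<eta>)) \<le> F u"
          proof (rule IB)
            show "\<forall>s\<in>{t - \<eta>..t - \<eta> / 2}. K * z (t - \<eta>) \<le> f (z s)"
            proof
              fix s assume s: "s \<in> {t - \<eta>..t - \<eta> / 2}"
              have "K * z (t - \<eta>) \<le> K * z s"
                using mono[of "t - \<eta>" s] s tpos K by auto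
              also have "\<dots> \<le> f (z s)" using M(2) T[of s] s tpos by auto
              finally show "K * z (t - \<eta>) \<le> f (z s)" .
            qed
          qed (use u \<eta> tpos in auto)
          hence "K * z (t - \<eta>) * (\<eta> / 2) \<le> F u" by simp
          from mult_left_mono[OF this less_imp_le[OF C_pos]]
          show "C * K * z (t - \<eta>) * (\<eta> / 2) \<le> C * F u" by (simp add: mult.assoc)
        qed
      qed (use tpos \<eta> in auto)
      have "z (t - \<eta> / 2) > 0" using z_pos tpos \<eta> delta_pos by auto
      with key have "A * z (t - \<eta>) \<le> z t"
        by (simp add: A_def power2_eq_square field_simps)
      moreover have "z (t - \<epsilon>) \<le> z (t - \<eta>)" using mono[of "t - \<epsilon>" "t - \<eta>"] tpos \<eta> by auto
      moreover have ze: "z (t - \<epsilon>) > 0" using z_pos tpos delta_pos by auto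
      ultimately have "A * z (t - \<epsilon>) \<le> z t" using A
        by (meson mult_left_mono less_imp_le order_trans)
      hence "e * A * z (t - \<epsilon>) \<le> e * z t" using e by (simp add: mult.assoc)
      moreover have "z (t - \<epsilon>) < e * A * z (t - \<epsilon>)" using eA ze by simp
      ultimately have lt: "z (t - \<epsilon>) < e * z t" by linarith
      have zt: "z t > 0" using z_pos[rule_format, of t] tpos \<eta> delta_pos by linarith
      show "dist (z (t - \<epsilon>) / z t) 0 < e"
        using lt zt ze by (simp add: dist_real_def divide_simps)
    qed
  qed
  show ?thesis using ztop ratio by blast
qed

end
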